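(* Let $n\ge 3$ and let $(a_{\mathbf{i}})_{\mathbf{i}\in\mathbb{Z}^n}$ be either an $\mathrm{SL}_2$-tiling or an anti-$\mathrm{SL}_2$-tiling of $\mathbb{Z}^n$. Then for every $r\in\mathbb{Z}$, the value $a_{\mathbf{i}}$ is the same for all $\mathbf{i}=(i_1,\dots,i_n)\in\mathbb{Z}^n$ with $i_1+\dots+i_n=r$.
   Context: Write $\mathbf{i}=(i_1,\dots,i_n)\in\mathbb{Z}^n$ and $\mathbf{e}_k$ for the $k$-th standard unit vector. An $\mathrm{SL}_2$-tiling (resp. anti-$\mathrm{SL}_2$-tiling) of $\mathbb{Z}^n$ is an array $(a_{\mathbf{i}})_{\mathbf{i}\in\mathbb{Z}^n}$ with all $a_{\mathbf{i}}\in\mathbb{Z}_{>0}$ such that for all $\mathbf{i}\in\mathbb{Z}^n$ and all $k\ne\ell$: $a_{\mathbf{i}+\mathbf{e}_\ell}a_{\mathbf{i}+\mathbf{e}_k}-a_{\mathbf{i}}a_{\mathbf{i}+\mathbf{e}_k+\mathbf{e}_\ell}=1$ (resp. $=-1$). *)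

theory Defs
  imports Main
begin

text \<open>Points of Z^n are represented as functions nat => int that vanish outside {0..<n}
  (coordinate k of the paper corresponds to index k-1).\<close>

definition lattice :: "nat \<Rightarrow> (nat \<Rightarrow> int) set" where
  "lattice n = {i. \<forall>k\<ge>n. i k = 0}"

definition shift :: "(nat \<Rightarrow> int) \<Rightarrow> nat \<Rightarrow> (nat \<Rightarrow> int)" where
  "shift i k = (\<lambda>j. if j = k then i j + 1 else i j)"

definition sl2_tiling_sgn :: "int \<Rightarrow> nat \<Rightarrow> ((nat \<Rightarrow> int) \<Rightarrow> int) \<Rightarrow> bool" where
  "sl2_tiling_sgn eps n a \<longleftrightarrow>
     (\<forall>i\<in>lattice n. a i > 0) \<and>
     (\<forall>i\<in>lattice n. \<forall>k<n. \<forall>l<n. k \<noteq> l \<longrightarrow>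
        a (shift i l) * a (shift i k) - a i * a (shift (shift i k) l) = eps)"

definition SL2_tiling :: "nat \<Rightarrow> ((nat \<Rightarrow> int) \<Rightarrow> int) \<Rightarrow> bool" where
  "SL2_tiling n a \<longleftrightarrow> sl2_tiling_sgn 1 n a"

definition anti_SL2_tiling :: "nat \<Rightarrow> ((nat \<Rightarrow> int) \<Rightarrow> int) \<Rightarrow> bool" where
  "anti_SL2_tiling n a \<longleftrightarrow> sl2_tiling_sgn (-1) n a"

end

theory Submission
  imports Defs
begin

lemma sum_upd:
  fixes f :: "nat \<Rightarrow> int"
  assumes "k < n"
  shows "(\<Sum>j<n. (f(k := v)) j) = (\<Sum>j<n. f j) - f k + v"
proof -
  have "(\<Sum>j<n. (f(k := v)) j) = (f(k:=v)) k + (\<Sum>j\<in>{..<n}-{k}. (f(k := v)) j)"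
    using assms by (simp add: sum.remove)
  also have "(\<Sum>j\<in>{..<n}-{k}. (f(k := v)) j) = (\<Sum>j\<in>{..<n}-{k}. f j)"
    by (rule sum.cong) auto
  also have "(\<Sum>j<n. f j) = f k + (\<Sum>j\<in>{..<n}-{k}. f j)"
    using assms by (simp add: sum.remove)
  ultimately show ?thesis by simp
qed

lemma shift_comm: "shift (shift i k) l = shift (shift i l) k"
  unfolding shift_def by (auto simp: fun_eq_iff)

lemma shift_lattice: "i \<in> lattice n \<Longrightarrow> k < n \<Longrightarrow> shift i k \<in> lattice n"
  unfolding shift_def lattice_def by auto

lemma upd_lattice: "i \<in> lattice n \<Longrightarrow> k < n \<Longrightarrow> i(k := v) \<in> lattice n"
  unfolding lattice_def by auto

lemma key_alg:
  fixes x xk xl xm xkl xkm xlm A eps :: int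
  assumes "xl * xk - x * xkl = eps" "xm * xk - x * xkm = eps" "xm * xl - x * xlm = eps"
    "xkm * xkl - xk * A = eps" "xlm * xkl - xl * A = eps"
  shows "eps * ((xk - xl) * (xk * xl - eps + x^2)) = 0"
proof -
  have h1: "x * xkm = xm * xk - eps" and h2: "x * xlm = xm * xl - eps" and h0: "x * xkl = xl * xk - eps"
    using assms by linarith+
  have "x^2 * xl * (xkm * xkl - xk * A) - x^2 * xk * (xlm * xkl - xl * A) = x^2 * xl * eps - x^2 * xk * eps"
    using assms(4,5) by simp
  hence "(x * xkl) * ((x * xkm) * xl - (x * xlm) * xk) = x^2 * xl * eps - x^2 * xk * eps"
    by (simp add: algebra_simps power2_eq_square)
  hence "(xl * xk - eps) * ((xm * xk - eps) * xl - (xm * xl - eps) * xk) = x^2 * xl * eps - x^2 * xk * eps"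
    by (simp only: h0 h1 h2)
  thus ?thesis by (simp add: algebra_simps power2_eq_square)
qed

lemma step:
  assumes n3: "n \<ge> 3" and T: "sl2_tiling_sgn eps n a" and eps: "eps = 1 \<or> eps = -1"
    and p: "p \<in> lattice n" and kl: "k < n" "l < n" "k \<noteq> l"
  shows "a (shift p k) = a (shift p l)"
proof -
  obtain m where m: "m < n" "m \<noteq> k" "m \<noteq> l"
  proof -
    have "\<exists>m\<in>{0,1,2::nat}. m \<noteq> k \<and> m \<noteq> l" by auto
    then obtain m where "m\<in>{0,1,2::nat}" "m \<noteq> k" "m \<noteq> l" by blast
    then show ?thesis using that[of m] n3 by auto
  qed
  have pos: "\<And>i. i \<in> lattice n \<Longrightarrow> a i > 0" using T unfolding sl2_tiling_sgn_def by blast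
  have R: "\<And>i k l. i \<in> lattice n \<Longrightarrow> k < n \<Longrightarrow> l < n \<Longrightarrow> k \<noteq> l \<Longrightarrow>
        a (shift i l) * a (shift i k) - a i * a (shift (shift i k) l) = eps"
    using T unfolding sl2_tiling_sgn_def by blast
  have e1: "a (shift p l) * a (shift p k) - a p * a (shift (shift p k) l) = eps"
    using R[OF p kl] .
  have e2: "a (shift p m) * a (shift p k) - a p * a (shift (shift p k) m) = eps"
    using R[OF p kl(1) m(1)] m by auto
  have e3: "a (shift p m) * a (shift p l) - a p * a (shift (shift p l) m) = eps"
    using R[OF p kl(2) m(1)] m by auto
  have e4: "a (shift (shift p k) m) * a (shift (shift p k) l) - a (shift p k) * a (shift (shift (shift p k) l) m) = eps"
    using R[OF shift_lattice[OF p kl(1)] kl(2) m(1)] m by auto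
  have e5: "a (shift (shift p l) m) * a (shift (shift p l) k) - a (shift p l) * a (shift (shift (shift p l) k) m) = eps"
    using R[OF shift_lattice[OF p kl(2)] kl(1) m(1)] m by auto
  have e5': "a (shift (shift p l) m) * a (shift (shift p k) l) - a (shift p l) * a (shift (shift (shift p k) l) m) = eps"
    using e5 by (simp add: shift_comm[of p l k])
  have "eps * ((a (shift p k) - a (shift p l)) * (a (shift p k) * a (shift p l) - eps + (a p)^2)) = 0"
    by (rule key_alg[OF e1 e2 e3 e4 e5'])
  moreover have "a (shift p k) * a (shift p l) - eps + (a p)^2 > 0"
  proof -
    have "a (shift p k) \<ge> 1" "a (shift p l) \<ge> 1" "a p \<ge> 1"
      using pos[OF shift_lattice[OF p kl(1)]] pos[OF shift_lattice[OF p kl(2)]] pos[OF p] by auto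
    hence "a (shift p k) * a (shift p l) \<ge> 1" "(a p)^2 \<ge> 1"
      using mult_mono[of 1 "a (shift p k)" 1 "a (shift p l)"] mult_mono[of 1 "a p" 1 "a p"]
      by (auto simp: power2_eq_square)
    thus ?thesis using eps by auto
  qed
  ultimately show ?thesis using eps by auto
qed

lemma step2:
  assumes n3: "n \<ge> 3" and T: "sl2_tiling_sgn eps n a" and eps: "eps = 1 \<or> eps = -1"
    and q: "q \<in> lattice n" and kl: "k < n" "l < n" "k \<noteq> l"
  shows "a q = a (q(k := q k - 1, l := q l + 1))"
proof -
  define p where "p = q(k := q k - 1)"
  have p: "p \<in> lattice n" using upd_lattice[OF q kl(1)] p_def by simp
  have "shift p k = q" unfolding shift_def p_def by (auto simp: fun_eq_iff)
  moreover have "shift p l = q(k := q k - 1, l := q l + 1)"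
    unfolding shift_def p_def using kl by (auto simp: fun_eq_iff)
  ultimately show ?thesis using step[OF n3 T eps p kl] by simp
qed

lemma transfer_nat:
  assumes n3: "n \<ge> 3" and T: "sl2_tiling_sgn eps n a" and eps: "eps = 1 \<or> eps = -1"
    and kl: "k < n" "l < n" "k \<noteq> l"
  shows "\<forall>q\<in>lattice n. a q = a (q(k := q k - int t, l := q l + int t))"
proof (induction t)
  case 0
  then show ?case by simp
next
  case (Suc t)
  show ?case
  proof
    fix q assume q: "q \<in> lattice n"
    define q' where "q' = q(k := q k - int t, l := q l + int t)"
    have q': "q' \<in> lattice n" unfolding q'_def using q kl by (intro upd_lattice) auto
    have "a q = a q'" using Suc q q'_def by blast
    also have "\<dots> = a (q'(k := q' k - 1, l := q' l + 1))" by (rule step2[OF n3 T eps q' kl])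
    also have "q'(k := q' k - 1, l := q' l + 1) = q(k := q k - int (Suc t), l := q l + int (Suc t))"
      unfolding q'_def using kl by (auto simp: fun_eq_iff)
    finally show "a q = a (q(k := q k - int (Suc t), l := q l + int (Suc t)))" .
  qed
qed

lemma transfer:
  assumes n3: "n \<ge> 3" and T: "sl2_tiling_sgn eps n a" and eps: "eps = 1 \<or> eps = -1"
    and kl: "k < n" "l < n" "k \<noteq> l" and q: "q \<in> lattice n"
  shows "a q = a (q(k := q k - t, l := q l + t))"
proof (cases "t \<ge> 0")
  case True
  then obtain u where "t = int u" using nonneg_eq_int by blast
  then show ?thesis using transfer_nat[OF n3 T eps kl] q by blast
next
  case False
  then obtain u where u: "- t = int u" using nonneg_eq_int[of "-t"] by auto
  have "a q = a (q(l := q l - int u, k := q k + int u))"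
    using transfer_nat[OF n3 T eps kl(2) kl(1)] kl q by auto
  also have "q(l := q l - int u, k := q k + int u) = q(k := q k - t, l := q l + t)"
    using u kl by (auto simp: fun_eq_iff)
  finally show ?thesis .
qed

lemma canon:
  assumes n3: "n \<ge> 3" and T: "sl2_tiling_sgn eps n a" and eps: "eps = 1 \<or> eps = -1"
  shows "m \<le> n \<Longrightarrow> \<forall>i. (\<forall>k. k \<ge> m \<and> k \<ge> 1 \<longrightarrow> i k = 0) \<longrightarrow>
     a i = a (\<lambda>j. if j = 0 then (\<Sum>k<n. i k) else 0)"
proof (induction m)
  case 0
  show ?case
  proof (intro allI impI)
    fix i :: "nat \<Rightarrow> int" assume h: "\<forall>k. k \<ge> 0 \<and> k \<ge> 1 \<longrightarrow> i k = 0"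
    have "(\<Sum>k<n. i k) = (\<Sum>k\<in>{0}. i k)"
      using n3 h by (intro sum.mono_neutral_right) auto
    hence "(\<lambda>j. if j = 0 then (\<Sum>k<n. i k) else 0) = i" using h by (auto simp: fun_eq_iff)
    thus "a i = a (\<lambda>j. if j = 0 then (\<Sum>k<n. i k) else 0)" by simp
  qed
next
  case (Suc m)
  show ?case
  proof (intro allI impI)
    fix i :: "nat \<Rightarrow> int" assume h: "\<forall>k. k \<ge> Suc m \<and> k \<ge> 1 \<longrightarrow> i k = 0"
    show "a i = a (\<lambda>j. if j = 0 then (\<Sum>k<n. i k) else 0)"
    proof (cases "m = 0")
      case True
      have "\<forall>k. k \<ge> m \<and> k \<ge> 1 \<longrightarrow> i k = 0" using h True by auto
      moreover have "m \<le> n" using Suc.prems by simp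
      ultimately show ?thesis using Suc.IH by blast
    next
      case False
      have mn: "m < n" using Suc by simp
      have il: "i \<in> lattice n" unfolding lattice_def using h Suc by auto
      define i' where "i' = i(m := i m - i m, 0 := i 0 + i m)"
      have "a i = a i'" unfolding i'_def
        by (rule transfer[OF n3 T eps mn _ False il]) (use n3 in auto)
      moreover have "\<forall>k. k \<ge> m \<and> k \<ge> 1 \<longrightarrow> i' k = 0" using h False unfolding i'_def
        by (auto simp: le_Suc_eq)
      moreover have "(\<Sum>k<n. i' k) = (\<Sum>k<n. i k)"
        unfolding i'_def using mn n3 False sum_upd[of 0 n "i(m := i m - i m)" "i 0 + i m"] sum_upd[of m n i "i m - i m"] by simp
      moreover have "a i' = a (\<lambda>j. if j = 0 then (\<Sum>k<n. i' k) else 0)"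
      proof -
        have "m \<le> n" using Suc.prems by simp
        from Suc.IH[OF this] have "\<forall>i. (\<forall>k. k \<ge> m \<and> k \<ge> 1 \<longrightarrow> i k = 0) \<longrightarrow>
           a i = a (\<lambda>j. if j = 0 then (\<Sum>k<n. i k) else 0)" .
        then show ?thesis using calculation(2) by blast
      qed
      ultimately show ?thesis by (simp only:)
    qed
  qed
qed

theorem lemma2p2:
  fixes n :: nat and a :: "(nat \<Rightarrow> int) \<Rightarrow> int"
  assumes "n \<ge> 3"
    and "SL2_tiling n a \<or> anti_SL2_tiling n a"
  shows "\<forall>r::int. \<forall>i\<in>lattice n. \<forall>j\<in>lattice n.
           (\<Sum>k<n. i k) = r \<longrightarrow> (\<Sum>k<n. j k) = r \<longrightarrow> a i = a j"
proof -
  obtain eps where T: "sl2_tiling_sgn eps n a" and eps: "eps = 1 \<or> eps = -1"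
    using assms(2) unfolding SL2_tiling_def anti_SL2_tiling_def by blast
  have C: "\<And>i. i \<in> lattice n \<Longrightarrow> a i = a (\<lambda>j. if j = 0 then (\<Sum>k<n. i k) else 0)"
  proof -
    fix i assume "i \<in> lattice n"
    hence h: "\<forall>k. k \<ge> n \<and> k \<ge> 1 \<longrightarrow> i k = 0" unfolding lattice_def by blast
    have "\<forall>i. (\<forall>k. k \<ge> n \<and> k \<ge> 1 \<longrightarrow> i k = 0) \<longrightarrow>
     a i = a (\<lambda>j. if j = 0 then (\<Sum>k<n. i k) else 0)" by (rule canon[OF assms(1) T eps, of n]) simp
    thus "a i = a (\<lambda>j. if j = 0 then (\<Sum>k<n. i k) else 0)" using h by blast
  qed
  show ?thesis
  proof (intro allI ballI impI)
    fix r i j assume i: "i \<in> lattice n" and j: "j \<in> lattice n"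
      and si: "(\<Sum>k<n. i k) = r" and sj: "(\<Sum>k<n. j k) = r"
    have "a i = a (\<lambda>x. if x = 0 then r else 0)" using C[OF i] si by (simp only:)
    also have "\<dots> = a j" using C[OF j] sj by (simp only:)
    finally show "a i = a j" .
  qed
qed

end
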